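(* Let $(X,d,\kappa)$ be a digital metric space with $1<|X|<\infty$, and let $T:X\to X$ be a weakly uniformly strict digital contraction. Then $T$ is neither one-to-one nor onto.
   Context: A digital metric space is a triple $(X,d,\kappa)$ where $X\subset\mathbb{Z}^n$ for some positive integer $n$, $\kappa$ is an adjacency relation on $X$, and $d$ is a metric on $X$. $T:X\to X$ is a weakly uniformly strict digital contraction if for every $\varepsilon>0$ there exists $\delta>0$ such that for all $x,y\in X$, $\varepsilon\le d(x,y)<\varepsilon+\delta$ implies $d(T(x),T(y))<\varepsilon$. *)

theory Defs
  imports "HOL-Analysis.Analysis"
begin

definition metric_on :: "'a set \<Rightarrow> ('a \<Rightarrow> 'a \<Rightarrow> real) \<Rightarrow> bool" where
  "metric_on X d \<longleftrightarrow>
     (\<forall>x\<in>X. \<forall>y\<in>X. 0 \<le> d x y) \<and>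
     (\<forall>x\<in>X. \<forall>y\<in>X. d x y = 0 \<longleftrightarrow> x = y) \<and>
     (\<forall>x\<in>X. \<forall>y\<in>X. d x y = d y x) \<and>
     (\<forall>x\<in>X. \<forall>y\<in>X. \<forall>z\<in>X. d x z \<le> d x y + d y z)"

definition adjacency_on :: "'a set \<Rightarrow> ('a \<Rightarrow> 'a \<Rightarrow> bool) \<Rightarrow> bool" where
  "adjacency_on X \<kappa> \<longleftrightarrow>
     (\<forall>x y. \<kappa> x y \<longrightarrow> x \<in> X \<and> y \<in> X) \<and>
     (\<forall>x y. \<kappa> x y \<longrightarrow> \<kappa> y x) \<and>
     (\<forall>x. \<not> \<kappa> x x)"

definition digital_metric_space ::
  "(int ^ 'n) set \<Rightarrow> (int ^ 'n \<Rightarrow> int ^ 'n \<Rightarrow> real) \<Rightarrow> (int ^ 'n \<Rightarrow> int ^ 'n \<Rightarrow> bool) \<Rightarrow> bool" where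
  "digital_metric_space X d \<kappa> \<longleftrightarrow> metric_on X d \<and> adjacency_on X \<kappa>"

definition weakly_uniformly_strict_digital_contraction ::
  "'a set \<Rightarrow> ('a \<Rightarrow> 'a \<Rightarrow> real) \<Rightarrow> ('a \<Rightarrow> 'a) \<Rightarrow> bool" where
  "weakly_uniformly_strict_digital_contraction X d T \<longleftrightarrow>
     (\<forall>\<epsilon>>0. \<exists>\<delta>>0. \<forall>x\<in>X. \<forall>y\<in>X.
        \<epsilon> \<le> d x y \<and> d x y < \<epsilon> + \<delta> \<longrightarrow> d (T x) (T y) < \<epsilon>)"

end

theory Submission
  imports Defs
begin

theorem proposition8p4:
  fixes X :: "(int ^ 'n) set" and d :: "int ^ 'n \<Rightarrow> int ^ 'n \<Rightarrow> real"
    and \<kappa> :: "int ^ 'n \<Rightarrow> int ^ 'n \<Rightarrow> bool" and T :: "int ^ 'n \<Rightarrow> int ^ 'n"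
  assumes "digital_metric_space X d \<kappa>"
    and "finite X" and "1 < card X"
    and "T ` X \<subseteq> X"
    and "weakly_uniformly_strict_digital_contraction X d T"
  shows "\<not> inj_on T X \<and> T ` X \<noteq> X"
proof -
  have met: "metric_on X d" using assms(1) by (simp add: digital_metric_space_def)
  have dec: "d (T x) (T y) < d x y" if "x \<in> X" "y \<in> X" "x \<noteq> y" for x y
  proof -
    have "d x y > 0" using met that unfolding metric_on_def
      by (metis order_le_less)
    then obtain \<delta> where "\<delta> > 0" and h: "\<forall>p\<in>X. \<forall>q\<in>X.
        d x y \<le> d p q \<and> d p q < d x y + \<delta> \<longrightarrow> d (T p) (T q) < d x y"
      using assms(5) unfolding weakly_uniformly_strict_digital_contraction_def
      by blast
    then show ?thesis using that by auto
  qed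
  have surj: "T ` X \<noteq> X"
  proof
    assume eq: "T ` X = X"
    let ?S = "(\<lambda>(x,y). d x y) ` (X \<times> X)"
    have fin: "finite ?S" using assms(2) by simp
    obtain u v where uv: "u \<in> X" "v \<in> X" "u \<noteq> v"
      proof -
      have "\<not> card X \<le> Suc 0" using assms(3) by simp
      then show ?thesis using that card_le_Suc0_iff_eq[OF assms(2)] by blast
    qed
    have ne: "?S \<noteq> {}" using uv by auto
    obtain a b where ab: "a \<in> X" "b \<in> X" "d a b = Max ?S"
      using Max_in[OF fin ne] by auto
    have "d u v > 0" using met uv unfolding metric_on_def by (metis order_le_less)
    moreover have "d u v \<le> Max ?S" using fin uv by (intro Max_ge) auto
    moreover have "d a a = 0" using ab(1) met unfolding metric_on_def by blast
    ultimately have "a \<noteq> b" using ab by auto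
    have "a \<in> T ` X" "b \<in> T ` X" using eq ab by auto
    then obtain a' b' where "a' \<in> X" "b' \<in> X" "T a' = a" "T b' = b"
      by blast
    then have "a' \<noteq> b'" using \<open>a \<noteq> b\<close> by auto
    then have "d a b < d a' b'" using dec \<open>a' \<in> X\<close> \<open>b' \<in> X\<close> \<open>T a' = a\<close> \<open>T b' = b\<close> by blast
    moreover have "d a' b' \<le> Max ?S" using fin \<open>a' \<in> X\<close> \<open>b' \<in> X\<close> by (intro Max_ge) auto
    ultimately show False using ab by simp
  qed
  moreover have "\<not> inj_on T X"
    using surj assms(2,4) endo_inj_surj by blast
  ultimately show ?thesis by simp
qed

end
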